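(* Let $D$ and $D'$ be minimized DFAs over the same alphabet with $S(D)=S(D')$. Then $D\cong_I D'$.
   Context: All DFAs are complete and all states are reachable; a DFA is \emph{minimized} if it is the minimal DFA for its language (no two distinct states $p\ne q$ have $L(p)=L(q)$). For languages, $L\sim L'$ means $L\triangle L'$ is finite; $[L]$ is the $\sim$-class of $L$. For a state $q$ of $D=(Q,\Sigma,\delta,q_0,A)$, $L(q)$ is the language recognized by $(Q,\Sigma,\delta,q,A)$, and $S(D)=\{[L(q)]:q\in Q\}$. The \emph{infinite part} $I(D)$ is the set of states $q$ with $\{w:\delta(q_0,w)=q\}$ infinite. $D\cong_I D'$ means there is a bijection $f:I(D)\to I(D')$ with $q\in A\iff f(q)\in A'$ and $f(\delta(q,c))=\delta'(f(q),c)$ for all $q\in I(D)$, $c\in\Sigma$. *)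

theory Defs
  imports Main
begin

record ('q, 'a) dfa =
  states :: "'q set"
  alphabet :: "'a set"
  delta :: "'q \<Rightarrow> 'a \<Rightarrow> 'q"
  init :: 'q
  accept :: "'q set"

definition delta_star :: "('q, 'a) dfa \<Rightarrow> 'q \<Rightarrow> 'a list \<Rightarrow> 'q" where
  "delta_star D q w = foldl (delta D) q w"

definition wf_dfa :: "('q, 'a) dfa \<Rightarrow> bool" where
  "wf_dfa D \<longleftrightarrow> finite (states D) \<and> finite (alphabet D) \<and>
     init D \<in> states D \<and> accept D \<subseteq> states D \<and>
     (\<forall>q\<in>states D. \<forall>c\<in>alphabet D. delta D q c \<in> states D) \<and>
     (\<forall>q\<in>states D. \<exists>w\<in>lists (alphabet D). delta_star D (init D) w = q)"

definition lang_from :: "('q, 'a) dfa \<Rightarrow> 'q \<Rightarrow> 'a list set" where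
  "lang_from D q = {w \<in> lists (alphabet D). delta_star D q w \<in> accept D}"

definition minimized :: "('q, 'a) dfa \<Rightarrow> bool" where
  "minimized D \<longleftrightarrow> wf_dfa D \<and>
     (\<forall>p\<in>states D. \<forall>q\<in>states D. p \<noteq> q \<longrightarrow> lang_from D p \<noteq> lang_from D q)"

definition fin_equiv :: "'a list set \<Rightarrow> 'a list set \<Rightarrow> bool" where
  "fin_equiv L L' \<longleftrightarrow> finite ((L - L') \<union> (L' - L))"

definition fe_class :: "'a list set \<Rightarrow> 'a list set set" where
  "fe_class L = {L'. fin_equiv L L'}"

definition S_classes :: "('q, 'a) dfa \<Rightarrow> 'a list set set set" where
  "S_classes D = {fe_class (lang_from D q) | q. q \<in> states D}"

definition infinite_part :: "('q, 'a) dfa \<Rightarrow> 'q set" where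
  "infinite_part D = {q \<in> states D.
      infinite {w \<in> lists (alphabet D). delta_star D (init D) w = q}}"

definition iso_I :: "('q, 'a) dfa \<Rightarrow> ('p, 'a) dfa \<Rightarrow> bool" where
  "iso_I D D' \<longleftrightarrow> (\<exists>f. bij_betw f (infinite_part D) (infinite_part D') \<and>
     (\<forall>q\<in>infinite_part D. (q \<in> accept D \<longleftrightarrow> f q \<in> accept D') \<and>
        (\<forall>c\<in>alphabet D. f (delta D q c) = delta D' (f q) c)))"

end

theory Submission
  imports Defs
begin

lemma ds_append: "delta_star D q (u @ w) = delta_star D (delta_star D q u) w"
  by (simp add: delta_star_def)

lemma ds_Nil[simp]: "delta_star D q [] = q"
  by (simp add: delta_star_def)

lemma ds_Cons: "delta_star D q (c # w) = delta_star D (delta D q c) w"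
  by (simp add: delta_star_def)

lemma wf_fin: "wf_dfa D \<Longrightarrow> finite (states D)" unfolding wf_dfa_def by simp
lemma wf_alpha: "wf_dfa D \<Longrightarrow> finite (alphabet D)" unfolding wf_dfa_def by simp
lemma wf_init: "wf_dfa D \<Longrightarrow> init D \<in> states D" unfolding wf_dfa_def by simp
lemma wf_delta: "wf_dfa D \<Longrightarrow> q \<in> states D \<Longrightarrow> c \<in> alphabet D \<Longrightarrow> delta D q c \<in> states D"
  unfolding wf_dfa_def by blast
lemma wf_reach: "wf_dfa D \<Longrightarrow> q \<in> states D \<Longrightarrow> \<exists>w\<in>lists (alphabet D). delta_star D (init D) w = q"
  unfolding wf_dfa_def by blast

lemma ds_states:
  assumes "wf_dfa D" "q \<in> states D" "w \<in> lists (alphabet D)"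
  shows "delta_star D q w \<in> states D"
  using assms(2,3)
proof (induction w arbitrary: q)
  case Nil then show ?case by simp
next
  case (Cons c w)
  have "delta D q c \<in> states D" using wf_delta[OF assms(1)] Cons.prems by auto
  then show ?case using Cons by (simp add: ds_Cons)
qed

lemma lang_quot:
  assumes "u \<in> lists (alphabet D)"
  shows "lang_from D (delta_star D q u) = {w \<in> lists (alphabet D). u @ w \<in> lang_from D q}"
  using assms unfolding lang_from_def by (auto simp: ds_append)

lemma nil_lang: "([] \<in> lang_from D q) = (q \<in> accept D)"
  unfolding lang_from_def by simp

lemma ds_pow:
  assumes "delta_star D r v = r"
  shows "delta_star D r (concat (replicate m v)) = r"
  by (induction m) (simp_all add: ds_append assms)

lemma fixed_unique:
  fixes M N :: "'a list set"
  assumes "M \<subseteq> lists A" "N \<subseteq> lists A" "u \<noteq> []"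
    and "\<forall>x\<in>lists A. x \<in> M \<longleftrightarrow> u @ x \<in> M"
    and "\<forall>x\<in>lists A. x \<in> N \<longleftrightarrow> u @ x \<in> N"
    and "finite ((M - N) \<union> (N - M))"
  shows "M = N"
proof (rule ccontr)
  let ?S = "(M - N) \<union> (N - M)"
  assume "M \<noteq> N"
  then have ne: "?S \<noteq> {}" by blast
  define m where "m = Max (length ` ?S)"
  have "m \<in> length ` ?S" unfolding m_def using assms(6) ne by (intro Max_in) auto
  then obtain x where x: "x \<in> ?S" "length x = m" by auto
  have "x \<in> lists A" using x(1) assms(1,2) by auto
  then have ux: "u @ x \<in> ?S" using x(1) assms(4,5) by auto
  have "length (u @ x) \<le> m" unfolding m_def using assms(6) ux by (metis Max_ge finite_imageI imageI)
  then show False using x(2) assms(3) by simp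
qed

lemma quot_fin:
  assumes "finite ((M - N) \<union> (N - M))"
  shows "finite (({w \<in> B. u @ w \<in> M} - {w \<in> B. u @ w \<in> N}) \<union> ({w \<in> B. u @ w \<in> N} - {w \<in> B. u @ w \<in> M}))"
    (is "finite ?T")
proof -
  have "(\<lambda>w. u @ w) ` ?T \<subseteq> (M - N) \<union> (N - M)" by auto
  then have "finite ((\<lambda>w. u @ w) ` ?T)" using assms finite_subset by blast
  moreover have "inj_on (\<lambda>w. u @ w) ?T" by (auto simp: inj_on_def)
  ultimately show ?thesis using finite_imageD by blast
qed

lemma cycle_inf:
  assumes "wf_dfa D" "s \<in> states D" "u \<in> lists (alphabet D)" "u \<noteq> []" "delta_star D s u = s"
  shows "s \<in> infinite_part D"
proof -
  obtain z where z: "z \<in> lists (alphabet D)" "delta_star D (init D) z = s"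
    using wf_reach[OF assms(1,2)] by blast
  let ?W = "{w \<in> lists (alphabet D). delta_star D (init D) w = s}"
  let ?g = "\<lambda>m. z @ concat (replicate m u)"
  have "range ?g \<subseteq> ?W" using z assms(3,5) by (auto simp: ds_append ds_pow)
  moreover have "inj ?g"
  proof (rule injI)
    fix a b assume "?g a = ?g b"
    then have "length (concat (replicate a u)) = length (concat (replicate b u))" by simp
    then have "a * length u = b * length u" by (simp add: length_concat sum_list_replicate)
    then show "a = b" using assms(4) by simp
  qed
  ultimately have "infinite ?W"
  proof -
    assume a1: "range ?g \<subseteq> ?W" and a2: "inj ?g"
    show "infinite ?W"
    proof
      assume "finite ?W"
      then have "finite (range ?g)" using a1 by (rule finite_subset[rotated])
      then have "finite (UNIV :: nat set)" using a2 by (rule finite_imageD)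
      then show False by simp
    qed
  qed
  then show ?thesis using assms(2) unfolding infinite_part_def by simp
qed

lemma inf_closed:
  assumes "p \<in> infinite_part D" "y \<in> lists (alphabet D)" "wf_dfa D"
  shows "delta_star D p y \<in> infinite_part D"
proof -
  let ?W = "{w \<in> lists (alphabet D). delta_star D (init D) w = p}"
  let ?V = "{w \<in> lists (alphabet D). delta_star D (init D) w = delta_star D p y}"
  have "(\<lambda>w. w @ y) ` ?W \<subseteq> ?V" using assms(2) by (auto simp: ds_append)
  moreover have "inj_on (\<lambda>w. w @ y) ?W" by (auto simp: inj_on_def)
  moreover have "infinite ?W" using assms(1) unfolding infinite_part_def by simp
  ultimately have "infinite ?V"
  proof -
    assume a1: "(\<lambda>w. w @ y) ` ?W \<subseteq> ?V" and a2: "inj_on (\<lambda>w. w @ y) ?W" and a3: "infinite ?W"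
    show "infinite ?V"
    proof
      assume "finite ?V"
      then have "finite ((\<lambda>w. w @ y) ` ?W)" using a1 by (rule finite_subset[rotated])
      then have "finite ?W" using a2 by (rule finite_imageD)
      then show False using a3 by simp
    qed
  qed
  moreover have "p \<in> states D" using assms(1) unfolding infinite_part_def by simp
  then have "delta_star D p y \<in> states D" using ds_states[OF assms(3) _ assms(2)] by simp
  ultimately show ?thesis unfolding infinite_part_def by simp
qed

lemma pump:
  assumes "wf_dfa D" "q \<in> infinite_part D"
  shows "\<exists>x v y r. x \<in> lists (alphabet D) \<and> v \<in> lists (alphabet D) \<and> y \<in> lists (alphabet D)
     \<and> v \<noteq> [] \<and> delta_star D (init D) x = r \<and> delta_star D r v = r \<and> delta_star D r y = q"
proof -
  let ?W = "{w \<in> lists (alphabet D). delta_star D (init D) w = q}"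
  let ?n = "card (states D)"
  have inf: "infinite ?W" using assms(2) unfolding infinite_part_def by simp
  have fin: "finite {w. set w \<subseteq> alphabet D \<and> length w \<le> ?n}"
    using wf_alpha[OF assms(1)] by (intro finite_lists_length_le) auto
  have "\<not> ?W \<subseteq> {w. set w \<subseteq> alphabet D \<and> length w \<le> ?n}"
    using inf fin finite_subset by blast
  then obtain w where w0: "w \<in> ?W" "w \<notin> {w. set w \<subseteq> alphabet D \<and> length w \<le> ?n}"
    by blast
  then have w: "w \<in> lists (alphabet D)" "delta_star D (init D) w = q" "length w > ?n"
    by auto
  define f where "f i = delta_star D (init D) (take i w)" for i
  have fs: "f ` {..?n} \<subseteq> states D"
  proof
    fix s assume "s \<in> f ` {..?n}"
    then obtain i where "s = f i" by auto
    moreover have "take i w \<in> lists (alphabet D)" using w(1) by (auto dest: in_set_takeD)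
    moreover have "init D \<in> states D" using wf_init[OF assms(1)] by simp
    ultimately show "s \<in> states D" unfolding f_def using ds_states[OF assms(1)] by simp
  qed
  have "\<not> inj_on f {..?n}"
  proof
    assume "inj_on f {..?n}"
    then have "card (f ` {..?n}) = Suc ?n" by (simp add: card_image)
    moreover have "card (f ` {..?n}) \<le> ?n"
      using fs wf_fin[OF assms(1)] by (simp add: card_mono)
    ultimately show False by simp
  qed
  then obtain i j where ij: "i \<le> ?n" "j \<le> ?n" "i \<noteq> j" "f i = f j"
    unfolding inj_on_def by blast
  obtain a b where ab: "a < b" "b \<le> ?n" "f a = f b"
  proof (cases "i < j")
    case True then show ?thesis using that ij by blast
  next
    case False then have "j < i" using ij(3) by simp
    then show ?thesis using that ij by fastforce
  qed
  define x where "x = take a w"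
  define v where "v = take (b - a) (drop a w)"
  define y where "y = drop b w"
  define r where "r = f a"
  have tb: "take b w = x @ v" unfolding x_def v_def using take_add[of a "b-a" w] ab(1) by simp
  have ww: "w = x @ v @ y"
  proof -
    have "w = take b w @ drop b w" by simp
    also have "\<dots> = x @ v @ y" by (simp add: tb y_def)
    finally show ?thesis .
  qed
  have L: "x \<in> lists (alphabet D)" "v \<in> lists (alphabet D)" "y \<in> lists (alphabet D)"
    using w(1) ww by auto
  have NE: "v \<noteq> []" unfolding v_def using ab w(3) by simp
  have X: "delta_star D (init D) x = r" unfolding r_def f_def x_def by simp
  have V: "delta_star D r v = r"
  proof -
    have "f b = delta_star D r v" unfolding f_def tb ds_append X ..
    then show ?thesis using ab(3) r_def by simp
  qed
  have Y: "delta_star D r y = q"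
    using w(2) ww V X by (simp add: ds_append)
  show ?thesis
    apply (rule exI[of _ x], rule exI[of _ v], rule exI[of _ y], rule exI[of _ r])
    using L NE X V Y by simp
qed


lemma lang_sub: "lang_from D q \<subseteq> lists (alphabet D)"
  unfolding lang_from_def by auto

lemma transfer:
  fixes D :: "('q, 'a) dfa" and D' :: "('p, 'a) dfa"
  assumes wf: "wf_dfa D" and wf': "wf_dfa D'"
    and alph: "alphabet D = alphabet D'"
    and cls: "\<forall>q\<in>states D. \<exists>q'\<in>states D'. fin_equiv (lang_from D q) (lang_from D' q')"
    and qI: "q \<in> infinite_part D"
  shows "\<exists>q'\<in>infinite_part D'. lang_from D' q' = lang_from D q"
proof -
  obtain x v y r where xvy: "x \<in> lists (alphabet D)" "v \<in> lists (alphabet D)" "y \<in> lists (alphabet D)"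
    "v \<noteq> []" "delta_star D (init D) x = r" "delta_star D r v = r" "delta_star D r y = q"
    using pump[OF wf qI] by blast
  have rS: "r \<in> states D" using xvy(1,5) ds_states[OF wf wf_init[OF wf]] by blast
  obtain r' where r': "r' \<in> states D'" "fin_equiv (lang_from D r) (lang_from D' r')"
    using cls rS by blast
  define g where "g k = delta_star D' r' (concat (replicate k v))" for k
  have vl: "concat (replicate k v) \<in> lists (alphabet D')" for k
    using xvy(2) alph by (induction k) auto
  have gS: "range g \<subseteq> states D'" unfolding g_def using ds_states[OF wf' r'(1) vl] by auto
  have "\<not> inj g"
  proof
    assume ig: "inj g"
    have "finite (range g)" using gS wf_fin[OF wf'] finite_subset by blast
    then have "finite (UNIV :: nat set)" using ig by (rule finite_imageD)
    then show False by simp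
  qed
  then obtain i j where ij0: "i \<noteq> j" "g i = g j" unfolding inj_def by blast
  obtain a b where ab: "a < b" "g a = g b"
  proof (cases "i < j")
    case True then show ?thesis using that ij0 by blast
  next
    case False then have "j < i" using ij0(1) by simp
    then show ?thesis using that ij0 by fastforce
  qed
  define s' where "s' = g a"
  define u where "u = concat (replicate (b - a) v)"
  have ul: "u \<in> lists (alphabet D')" unfolding u_def by (rule vl)
  have une: "u \<noteq> []" unfolding u_def using ab(1) xvy(4) by simp
  have "concat (replicate b v) = concat (replicate a v) @ u"
    unfolding u_def using ab(1) by (metis concat_append le_add_diff_inverse less_imp_le replicate_add)
  then have s'cyc: "delta_star D' s' u = s'"
    using ab(2) unfolding s'_def g_def by (simp add: ds_append)
  have s'S: "s' \<in> states D'" unfolding s'_def using gS by auto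
  have s'I: "s' \<in> infinite_part D'" using cycle_inf[OF wf' s'S ul une s'cyc] .
  have rcyc: "delta_star D r u = r" unfolding u_def using ds_pow[of D r v] xvy(6) by simp
  have rcyca: "delta_star D r (concat (replicate a v)) = r" using ds_pow[of D r v] xvy(6) by simp
  have eqL: "lang_from D' s' = lang_from D r"
  proof (rule fixed_unique[of _ "alphabet D'" _ u])
    show "lang_from D' s' \<subseteq> lists (alphabet D')" by (rule lang_sub)
    show "lang_from D r \<subseteq> lists (alphabet D')" using lang_sub alph by metis
    show "u \<noteq> []" by (rule une)
    show "\<forall>z\<in>lists (alphabet D'). z \<in> lang_from D' s' \<longleftrightarrow> u @ z \<in> lang_from D' s'"
      using lang_quot[OF ul, of s'] s'cyc by (metis (no_types, lifting) mem_Collect_eq)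
    show "\<forall>z\<in>lists (alphabet D'). z \<in> lang_from D r \<longleftrightarrow> u @ z \<in> lang_from D r"
      using lang_quot[of u D r] ul alph rcyc by (metis (no_types, lifting) mem_Collect_eq)
    have q1: "lang_from D' s' = {w \<in> lists (alphabet D'). concat (replicate a v) @ w \<in> lang_from D' r'}"
      unfolding s'_def g_def by (rule lang_quot[OF vl])
    have q2: "lang_from D r = {w \<in> lists (alphabet D'). concat (replicate a v) @ w \<in> lang_from D r}"
      using lang_quot[of "concat (replicate a v)" D r] vl alph rcyca by simp
    have "finite ((lang_from D r - lang_from D' r') \<union> (lang_from D' r' - lang_from D r))"
      using r'(2) unfolding fin_equiv_def by simp
    then have "finite ((lang_from D r - lang_from D' s') \<union> (lang_from D' s' - lang_from D r))"
      using quot_fin[of "lang_from D r" "lang_from D' r'" "lists (alphabet D')" "concat (replicate a v)"]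
      q1 q2 by metis
    then show "finite ((lang_from D' s' - lang_from D r) \<union> (lang_from D r - lang_from D' s'))"
      by (simp add: Un_commute)
  qed
  define q' where "q' = delta_star D' s' y"
  have yl: "y \<in> lists (alphabet D')" using xvy(3) alph by simp
  have "q' \<in> infinite_part D'" unfolding q'_def by (rule inf_closed[OF s'I yl wf'])
  moreover have "lang_from D' q' = lang_from D q"
    unfolding q'_def lang_quot[OF yl] eqL
    using lang_quot[OF xvy(3), of r] xvy(7) alph by simp
  ultimately show ?thesis by blast
qed


lemma cls_dir:
  assumes "S_classes D = S_classes D'" "q \<in> states D"
  shows "\<exists>q'\<in>states D'. fin_equiv (lang_from D q) (lang_from D' q')"
proof -
  have "fe_class (lang_from D q) \<in> S_classes D'"
    using assms unfolding S_classes_def by blast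
  then obtain q' where q': "q' \<in> states D'" "fe_class (lang_from D q) = fe_class (lang_from D' q')"
    unfolding S_classes_def by blast
  have "lang_from D' q' \<in> fe_class (lang_from D' q')"
    unfolding fe_class_def fin_equiv_def by simp
  then have "fin_equiv (lang_from D q) (lang_from D' q')" using q'(2) unfolding fe_class_def
    by (metis mem_Collect_eq)
  then show ?thesis using q'(1) by blast
qed

theorem mainTheorem6:
  fixes D :: "('q, 'a) dfa" and D' :: "('p, 'a) dfa"
  assumes "minimized D" and "minimized D'"
    and "alphabet D = alphabet D'"
    and "S_classes D = S_classes D'"
  shows "iso_I D D'"
proof -
  have wf: "wf_dfa D" and wf': "wf_dfa D'" using assms(1,2) unfolding minimized_def by simp_all
  have mD: "\<And>p q. p \<in> states D \<Longrightarrow> q \<in> states D \<Longrightarrow> lang_from D p = lang_from D q \<Longrightarrow> p = q"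
    using assms(1) unfolding minimized_def by blast
  have mD': "\<And>p q. p \<in> states D' \<Longrightarrow> q \<in> states D' \<Longrightarrow> lang_from D' p = lang_from D' q \<Longrightarrow> p = q"
    using assms(2) unfolding minimized_def by blast
  have c1: "\<forall>q\<in>states D. \<exists>q'\<in>states D'. fin_equiv (lang_from D q) (lang_from D' q')"
    using cls_dir[OF assms(4)] by blast
  have c2: "\<forall>q\<in>states D'. \<exists>q'\<in>states D. fin_equiv (lang_from D' q) (lang_from D q')"
    using cls_dir[OF assms(4)[symmetric]] by blast
  have T1: "\<And>q. q \<in> infinite_part D \<Longrightarrow> \<exists>q'\<in>infinite_part D'. lang_from D' q' = lang_from D q"
    using transfer[OF wf wf' assms(3) c1] by blast
  have T2: "\<And>q. q \<in> infinite_part D' \<Longrightarrow> \<exists>q'\<in>infinite_part D. lang_from D q' = lang_from D' q"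
    using transfer[OF wf' wf assms(3)[symmetric] c2] by blast
  have IS: "infinite_part D \<subseteq> states D" "infinite_part D' \<subseteq> states D'"
    unfolding infinite_part_def by auto
  define f where "f q = (THE q'. q' \<in> states D' \<and> lang_from D' q' = lang_from D q)" for q
  have fchar: "f q = q'" if "q' \<in> states D'" "lang_from D' q' = lang_from D q" for q q'
    unfolding f_def
  proof (rule the_equality)
    show "q' \<in> states D' \<and> lang_from D' q' = lang_from D q" using that by simp
    fix z assume "z \<in> states D' \<and> lang_from D' z = lang_from D q"
    then show "z = q'" using that mD' by metis
  qed
  have fI: "f q \<in> infinite_part D' \<and> lang_from D' (f q) = lang_from D q" if qI: "q \<in> infinite_part D" for q
  proof -
    obtain q' where "q' \<in> infinite_part D'" "lang_from D' q' = lang_from D q" using T1 qI by blast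
    moreover then have "f q = q'" using fchar IS by blast
    ultimately show ?thesis by simp
  qed
  have bij: "bij_betw f (infinite_part D) (infinite_part D')"
    unfolding bij_betw_def
  proof
    show "inj_on f (infinite_part D)"
    proof (rule inj_onI)
      fix p q assume pq: "p \<in> infinite_part D" "q \<in> infinite_part D" "f p = f q"
      have "lang_from D p = lang_from D q" using fI[OF pq(1)] fI[OF pq(2)] pq(3) by simp
      moreover have "p \<in> states D" "q \<in> states D" using pq IS by auto
      ultimately show "p = q" using mD by blast
    qed
    show "f ` infinite_part D = infinite_part D'"
    proof
      show "f ` infinite_part D \<subseteq> infinite_part D'" using fI by blast
      show "infinite_part D' \<subseteq> f ` infinite_part D"
      proof
        fix q' assume q': "q' \<in> infinite_part D'"
        obtain q where "q \<in> infinite_part D" "lang_from D q = lang_from D' q'" using T2 q' by blast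
        moreover then have "f q = q'" using fchar IS q' by blast
        ultimately show "q' \<in> f ` infinite_part D" by blast
      qed
    qed
  qed
  have acc: "q \<in> accept D \<longleftrightarrow> f q \<in> accept D'" if "q \<in> infinite_part D" for q
    using fI[OF that] nil_lang by metis
  have tr: "f (delta D q c) = delta D' (f q) c" if "q \<in> infinite_part D" "c \<in> alphabet D" for q c
  proof -
    have cl: "[c] \<in> lists (alphabet D)" "[c] \<in> lists (alphabet D')" using that(2) assms(3) by auto
    have "delta D q c = delta_star D q [c]" by (simp add: ds_Cons)
    then have dI: "delta D q c \<in> infinite_part D" using inf_closed[OF that(1) cl(1) wf] by simp
    have fqS: "f q \<in> states D'" using fI[OF that(1)] IS by blast
    have "lang_from D' (delta D' (f q) c) = lang_from D (delta D q c)"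
      using lang_quot[OF cl(2), of "f q"] lang_quot[OF cl(1), of q] fI[OF that(1)] assms(3)
      by (simp add: ds_Cons)
    moreover have "delta D' (f q) c \<in> states D'"
      using wf_delta[OF wf' fqS] that(2) assms(3) by simp
    ultimately show ?thesis using fchar by metis
  qed
  show ?thesis unfolding iso_I_def using bij acc tr by blast
qed

end
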